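(* Let $D\subseteq\mathbb{R}^n$ be nonempty, convex, closed and bounded, and let $f:\mathbb{R}^n\to\mathbb{R}$ be continuously differentiable. Then in Method (CGMIS) (described in the context), the number of iterations (changes of the index $k$) at each stage $p$ is finite; i.e., for every $p$ the restart condition $\mu(x^k)<\delta_p$ is reached after finitely many iterations.
   Context: Notation: $f'(x)$ is the gradient of $f$; $\mu(x)=\max_{y\in D}\langle f'(x),x-y\rangle$. Method (CGMIS): Choose $w^0\in D$, $\beta\in(0,1)$, and a positive sequence $\{\delta_p\}$ with $\delta_p\to0$. Set $p=1$. (Step 0) Choose a sequence of numbers $\tau_{l,p}\in(0,1)$, $l=0,1,\dots$, with $\tau_{l,p}\to0$ as $l\to\infty$; set $k=0$, $l=0$, $x^0=w^{p-1}$, and choose $\lambda_0\in(0,\tau_{0,p}]$. (Step 1) If $\mu(x^k)<\delta_p$, set $w^p=x^k$, replace $p$ by $p+1$ and go to Step 0 (restart). Otherwise choose any $z^k\in D$ with $\langle f'(x^k),x^k-z^k\rangle\ge\delta_p$. (Step 2) Set $d^k=z^k-x^k$, $x^{k+1}=x^k+\lambda_k d^k$. If $f(x^{k+1})\le f(x^k)+\beta\lambda_k\langle f'(x^k),d^k\rangle$, choose any $\lambda_{k+1}\in[\lambda_k,\tau_{l,p}]$ (with $l$ unchanged). Otherwise set $\lambda'_{k+1}=\min\{\lambda_k,\tau_{l+1,p}\}$, replace $l$ by $l+1$, and choose any $\lambda_{k+1}\in(0,\lambda'_{k+1}]$. Set $k=k+1$ and go to Step 1. The iterations with a fixed value of $p$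 form stage $p$. *)

theory Defs
  imports "HOL-Analysis.Analysis"
begin

text \<open>The gap function mu(x) = max over y in D of the inner product of f'(x) with x - y.
  For compact nonempty D and continuous f' the supremum is attained, i.e. it is the maximum.\<close>
definition gap_mu :: "('a::euclidean_space \<Rightarrow> 'a) \<Rightarrow> 'a set \<Rightarrow> 'a \<Rightarrow> real" where
  "gap_mu f' D x = (SUP y\<in>D. f' x \<bullet> (x - y))"

text \<open>One run of a single stage of method CGMIS with tolerance delta, starting point x0,
  step-size bound sequence tau (tau l = tau_{l,p}); sequences x, z, lam and the counter l
  record x^k, z^k, lambda_k and the value of l at iteration k.\<close>
definition cgmis_stage_run ::
  "('a::euclidean_space \<Rightarrow> real) \<Rightarrow> ('a \<Rightarrow> 'a) \<Rightarrow> 'a set \<Rightarrow> real \<Rightarrow> real \<Rightarrow> (nat \<Rightarrow> real) \<Rightarrow> 'a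
    \<Rightarrow> (nat \<Rightarrow> 'a) \<Rightarrow> (nat \<Rightarrow> 'a) \<Rightarrow> (nat \<Rightarrow> real) \<Rightarrow> (nat \<Rightarrow> nat) \<Rightarrow> bool" where
  "cgmis_stage_run f f' D \<beta> \<delta> \<tau> x0 x z lam l \<longleftrightarrow>
     x 0 = x0 \<and> l 0 = 0 \<and> 0 < lam 0 \<and> lam 0 \<le> \<tau> 0 \<and>
     (\<forall>k. gap_mu f' D (x k) \<ge> \<delta> \<longrightarrow>
        z k \<in> D \<and> f' (x k) \<bullet> (x k - z k) \<ge> \<delta> \<and>
        x (Suc k) = x k + lam k *\<^sub>R (z k - x k) \<and>
        (if f (x (Suc k)) \<le> f (x k) + \<beta> * lam k * (f' (x k) \<bullet> (z k - x k))
         then l (Suc k) = l k \<and> lam k \<le> lam (Suc k) \<and> lam (Suc k) \<le> \<tau> (l k)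
         else l (Suc k) = Suc (l k) \<and> 0 < lam (Suc k) \<and>
              lam (Suc k) \<le> min (lam k) (\<tau> (Suc (l k)))))"

end

theory Submission
  imports Defs
begin

theorem proposition5p1:
  fixes f :: "'a::euclidean_space \<Rightarrow> real" and f' :: "'a \<Rightarrow> 'a" and D :: "'a set"
    and \<beta> \<delta> :: real and \<tau> :: "nat \<Rightarrow> real" and x0 :: 'a
    and x z :: "nat \<Rightarrow> 'a" and lam :: "nat \<Rightarrow> real" and l :: "nat \<Rightarrow> nat"
  assumes "D \<noteq> {}" and "convex D" and "closed D" and "bounded D"
    and "\<And>y. (f has_derivative (\<lambda>h. f' y \<bullet> h)) (at y)"
    and "continuous_on UNIV f'"
    and "0 < \<beta>" and "\<beta> < 1"
    and "0 < \<delta>"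
    and "\<And>i. 0 < \<tau> i \<and> \<tau> i < 1" and "\<tau> \<longlonglongrightarrow> 0"
    and "x0 \<in> D"
    and "cgmis_stage_run f f' D \<beta> \<delta> \<tau> x0 x z lam l"
  shows "\<exists>k. gap_mu f' D (x k) < \<delta>"
proof (rule ccontr)
  assume "\<not> ?thesis"
  hence allg: "\<And>k. gap_mu f' D (x k) \<ge> \<delta>" by (simp add: not_less)
  note run = assms(13)[unfolded cgmis_stage_run_def]
  have x0: "x 0 = x0" "l 0 = 0" "0 < lam 0" "lam 0 \<le> \<tau> 0" using run by auto
  have st: "z k \<in> D \<and> f' (x k) \<bullet> (x k - z k) \<ge> \<delta> \<and>
        x (Suc k) = x k + lam k *\<^sub>R (z k - x k) \<and>
        (if f (x (Suc k)) \<le> f (x k) + \<beta> * lam k * (f' (x k) \<bullet> (z k - x k))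
         then l (Suc k) = l k \<and> lam k \<le> lam (Suc k) \<and> lam (Suc k) \<le> \<tau> (l k)
         else l (Suc k) = Suc (l k) \<and> 0 < lam (Suc k) \<and>
              lam (Suc k) \<le> min (lam k) (\<tau> (Suc (l k))))" for k
    using run allg by blast
  have zD: "z k \<in> D" for k using st by blast
  have gk: "f' (x k) \<bullet> (x k - z k) \<ge> \<delta>" for k using st by blast
  have xs: "x (Suc k) = x k + lam k *\<^sub>R (z k - x k)" for k using st by blast
  have tau: "0 < \<tau> i" "\<tau> i < 1" for i using assms(10) by auto
  have inv: "x k \<in> D \<and> 0 < lam k \<and> lam k \<le> \<tau> (l k)" for k
  proof (induction k)
    case 0 then show ?case using x0 assms(12) by auto
  next
    case (Suc k)
    have lk1: "lam k < 1" using Suc tau[of "l k"] by linarith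
    have "x (Suc k) = (1 - lam k) *\<^sub>R x k + lam k *\<^sub>R z k"
      using xs[of k] by (simp add: algebra_simps)
    moreover have "(1 - lam k) *\<^sub>R x k + lam k *\<^sub>R z k \<in> D"
      using assms(2) Suc zD[of k] lk1 unfolding convex_def by auto
    moreover have "0 < lam (Suc k) \<and> lam (Suc k) \<le> \<tau> (l (Suc k))"
      using st[of k] Suc by (auto split: if_splits)
    ultimately show ?case by simp
  qed
  have xD: "x k \<in> D" and lpos: "0 < lam k" and ltau: "lam k \<le> \<tau> (l k)" for k
    using inv by auto
  have lmono: "l k \<le> l (Suc k)" for k using st[of k] by (auto split: if_splits)
  have lincr: "incseq l" by (rule incseq_SucI) (use lmono in auto)
  obtain B where B: "B > 0" "\<And>v. v \<in> D \<Longrightarrow> norm v \<le> B"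
    using assms(4) bounded_pos by blast
  have dB: "norm (z k - x k) \<le> 2 * B" for k
  proof -
    have "norm (z k - x k) \<le> norm (z k) + norm (x k)" by (rule norm_triangle_ineq4)
    also have "\<dots> \<le> 2 * B" using B(2)[OF zD[of k]] B(2)[OF xD[of k]] by simp
    finally show ?thesis .
  qed
  have compD: "compact D" using assms(3,4) compact_eq_bounded_closed by blast
  show False
  proof (cases "\<exists>L. \<forall>k. l k \<le> L")
    case True
    then obtain L where L: "\<And>k. l k \<le> L" by blast
    have fin: "finite (range l)" using L by (intro finite_subset[of "range l" "{..L}"]) auto
    have "Max (range l) \<in> range l" using fin by (intro Max_in) auto
    then obtain K where K0: "l K = Max (range l)" by auto
    have K: "l k \<le> l K" for k using K0 fin by simp
    have lconst: "k \<ge> K \<Longrightarrow> l k = l K" for k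
      using K[of k] lincr unfolding incseq_def by (meson le_antisym)
    have fcont: "continuous_on D f"
      by (meson assms(5) continuous_at_imp_continuous_on has_derivative_continuous)
    obtain xm where xm: "xm \<in> D" "\<And>v. v \<in> D \<Longrightarrow> f xm \<le> f v"
      using continuous_attains_inf[OF compD assms(1) fcont] by blast
    define c where "c = \<beta> * lam K * \<delta>"
    have cpos: "c > 0" unfolding c_def using assms(7,9) lpos[of K] by simp
    have ind: "f (x (K+n)) \<le> f (x K) - real n * c \<and> lam K \<le> lam (K+n)" for n
    proof (induction n)
      case 0 then show ?case by simp
    next
      case (Suc n)
      let ?k = "K + n"
      have eq: "l (Suc ?k) = l ?k" using lconst[of ?k] lconst[of "Suc ?k"] by simp
      have succ: "f (x (Suc ?k)) \<le> f (x ?k) + \<beta> * lam ?k * (f' (x ?k) \<bullet> (z ?k - x ?k))"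
                 "lam ?k \<le> lam (Suc ?k)"
        using st[of ?k] eq by (auto split: if_splits)
      have g: "f' (x ?k) \<bullet> (z ?k - x ?k) = - (f' (x ?k) \<bullet> (x ?k - z ?k))"
        by (simp add: inner_diff_right)
      have "lam K * \<delta> \<le> lam ?k * (f' (x ?k) \<bullet> (x ?k - z ?k))"
        using Suc.IH gk[of ?k] lpos[of K] assms(9) by (intro mult_mono) auto
      hence "c \<le> \<beta> * lam ?k * (f' (x ?k) \<bullet> (x ?k - z ?k))"
        unfolding c_def using assms(7) mult_left_mono[of _ _ \<beta>] by (simp add: mult.assoc)
      then show ?case using succ g Suc.IH by (simp add: algebra_simps)
    qed
    obtain n where n: "f (x K) - f xm < real n * c"
      using cpos ex_less_of_nat_mult by blast
    have "f xm \<le> f (x (K+n))" using xm xD by blast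
    then show False using ind[of n] n by linarith
  next
    case False
    define eps where "eps = (1 - \<beta>) * \<delta> / (2 * B + 1)"
    have epos: "eps > 0" unfolding eps_def using assms(8,9) B by simp
    have uc: "uniformly_continuous_on D f'"
      using compact_uniformly_continuous[OF continuous_on_subset[OF assms(6)] compD] by simp
    obtain eta where eta: "eta > 0" "\<And>a b. a \<in> D \<Longrightarrow> b \<in> D \<Longrightarrow> dist a b < eta \<Longrightarrow> dist (f' a) (f' b) < eps"
      using uc epos unfolding uniformly_continuous_on_def by blast
    have "eventually (\<lambda>i. \<tau> i < eta / (2 * B + 1)) sequentially"
      using assms(11) eta B by (intro order_tendstoD) auto
    then obtain L where L: "\<tau> L < eta / (2 * B + 1)" by (meson eventually_sequentially order_refl)
    have "\<exists>j. l j \<le> L \<and> L < l (Suc j)"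
    proof (rule ccontr)
      assume nj: "\<not> (\<exists>j. l j \<le> L \<and> L < l (Suc j))"
      have "l k \<le> L" for k by (induction k) (use x0 nj in auto)
      then show False using False by blast
    qed
    then obtain j where j: "l j \<le> L" "L < l (Suc j)" by blast
    have fail: "\<not> f (x (Suc j)) \<le> f (x j) + \<beta> * lam j * (f' (x j) \<bullet> (z j - x j))"
      and lj: "l j = L"
      using st[of j] j by (auto split: if_splits)
    have lamj: "lam j < eta / (2 * B + 1)" using ltau[of j] lj L by simp
    have lamj1: "lam j < 1" using ltau[of j] tau[of "l j"] by linarith
    define d where "d = z j - x j"
    define g where "g = (\<lambda>t. f (x j + t *\<^sub>R d))"
    have der: "DERIV g t :> f' (x j + t *\<^sub>R d) \<bullet> d" for t
    proof -
      have h1: "((\<lambda>t. x j + t *\<^sub>R d) has_derivative (\<lambda>h. h *\<^sub>R d)) (at t)"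
        by (auto intro!: derivative_eq_intros)
      have "(g has_derivative (\<lambda>h. f' (x j + t *\<^sub>R d) \<bullet> (h *\<^sub>R d))) (at t)"
        unfolding g_def using has_derivative_compose[OF h1 assms(5)] by (simp add: o_def)
      moreover have "(\<lambda>h. f' (x j + t *\<^sub>R d) \<bullet> (h *\<^sub>R d)) = (*) (f' (x j + t *\<^sub>R d) \<bullet> d)"
        by (auto simp: inner_scaleR_right)
      ultimately show ?thesis by (simp add: has_field_derivative_def)
    qed
    obtain t where t: "0 < t" "t < lam j" "g (lam j) - g 0 = (lam j - 0) * (f' (x j + t *\<^sub>R d) \<bullet> d)"
      using MVT2[OF lpos[of j], of g "\<lambda>t. f' (x j + t *\<^sub>R d) \<bullet> d"] der by blast
    define \<xi> where "\<xi> = x j + t *\<^sub>R d"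
    have "\<xi> = (1 - t) *\<^sub>R x j + t *\<^sub>R z j" unfolding \<xi>_def d_def by (simp add: algebra_simps)
    hence \<xi>D: "\<xi> \<in> D" using assms(2) xD[of j] zD[of j] t lamj1 unfolding convex_def by auto
    have "dist \<xi> (x j) = t * norm d" unfolding \<xi>_def by (simp add: dist_norm t(1) less_imp_le)
    also have "\<dots> \<le> lam j * (2 * B)" using t dB[of j] unfolding d_def
      by (intro mult_mono) auto
    also have "\<dots> < eta"
    proof -
      have "lam j * (2 * B + 1) < eta" using lamj B by (simp add: pos_less_divide_eq)
      thus ?thesis using lpos[of j] by (simp add: distrib_left)
    qed
    finally have "dist (f' \<xi>) (f' (x j)) < eps" using eta(2)[OF \<xi>D xD[of j]] by blast
    hence nrm: "norm (f' \<xi> - f' (x j)) < eps" by (simp add: dist_norm)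
    have "(f' \<xi> - f' (x j)) \<bullet> d \<le> norm (f' \<xi> - f' (x j)) * norm d" by (rule norm_cauchy_schwarz)
    also have "\<dots> \<le> eps * (2 * B)" using nrm dB[of j] epos unfolding d_def
      by (intro mult_mono) auto
    also have "\<dots> < (1 - \<beta>) * \<delta>"
    proof -
      have "eps * (2 * B + 1) = (1 - \<beta>) * \<delta>" unfolding eps_def using B by simp
      thus ?thesis using epos by (simp add: distrib_left)
    qed
    finally have A: "(f' \<xi> - f' (x j)) \<bullet> d < (1 - \<beta>) * \<delta>" .
    have gl: "g (lam j) = f (x (Suc j))" "g 0 = f (x j)" unfolding g_def d_def using xs[of j] by auto
    have "lam j * (\<beta> * (f' (x j) \<bullet> d)) < lam j * (f' \<xi> \<bullet> d)"
      using fail t(3) gl unfolding \<xi>_def d_def by (simp add: algebra_simps)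
    hence Bq: "\<beta> * (f' (x j) \<bullet> d) < f' \<xi> \<bullet> d" using lpos[of j] by simp
    have "f' (x j) \<bullet> d = - (f' (x j) \<bullet> (x j - z j))" unfolding d_def by (simp add: inner_diff_right)
    hence "(1 - \<beta>) * \<delta> \<le> (f' \<xi> - f' (x j)) \<bullet> d"
    proof -
      assume e: "f' (x j) \<bullet> d = - (f' (x j) \<bullet> (x j - z j))"
      define G where "G = f' (x j) \<bullet> (x j - z j)"
      have m: "(1-\<beta>) * \<delta> \<le> (1-\<beta>) * G" unfolding G_def
        using mult_left_mono[OF gk[of j], of "1-\<beta>"] assms(8) by simp
      have "(f' \<xi> - f' (x j)) \<bullet> d = f' \<xi> \<bullet> d + G" using e unfolding G_def
        by (simp add: inner_diff_left)
      moreover have "-(\<beta> * G) < f' \<xi> \<bullet> d" using Bq e unfolding G_def by simp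
      ultimately show ?thesis using m by (simp add: algebra_simps)
    qed
    then show False using A by linarith
  qed
qed

end
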